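(* In the Bernoulli model, for a text $T$ let $\mathrm{occ}(T)$ be the number of occurrences of $w$ in $T$, $\mathrm{cl}(T)$ the number of clumps of $w$ in $T$, and $\mathrm{cov}(T)$ the number of positions of $T$ covered by at least one occurrence of $w$. Define $$\mathfrak{K}(z,x,t)=\frac{x\,\pi_w (zt)^{\ell}}{1-x\,K(zt)}\qquad\text{and}\qquad F(z,y)=N(z)+\frac{R(z)}{\pi_w z^{\ell}}\;y\;\frac{1}{1-\dfrac{M(z)-K(z)}{\pi_w z^{\ell}}\,y}\;U(z).$$ Then, as formal power series, $$G(z,x,t,u):=\sum_{T\in\mathcal{A}^*}\mathbf{P}(T)\,z^{|T|}x^{\mathrm{occ}(T)}t^{\mathrm{cov}(T)}u^{\mathrm{cl}(T)}=F\big(z,\,u\,\mathfrak{K}(z,x,t)\big).$$ Moreover $\mathfrak{K}(z,x,t)=\sum_{\mathfrak{c}}\mathbf{P}(\mathfrak{c})z^{|\mathfrak{c}|}t^{|\mathfrak{c}|}x^{\mathrm{occ}(\mathfrak{c})}$, the sum being over all words of $w\mathcal{C}^*$ (the possible clump words).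
   Context: Let $\mathcal{A}$ be a finite alphabet with $|\mathcal{A}|\ge2$ and $w\in\mathcal{A}^*$ a fixed word of length $\ell=|w|\ge 2$. Bernoulli model: each letter $a\in\mathcal{A}$ has probability $p_a>0$, $\sum_a p_a=1$, and $\mathbf{P}(a_1\cdots a_n)=\prod_i p_{a_i}$. For a language $L$ its generating function is $L(z)=\sum_{x\in L}\mathbf{P}(x)z^{|x|}$; $\pi_w=\mathbf{P}(w)$. An occurrence of $w$ in $T$ is a position interval $[i,i+\ell-1]$ with $T_i\cdots T_{i+\ell-1}=w$; two occurrences overlap if their intervals share a position; clumps are equivalence classes of occurrences under the transitive closure of overlapping. Autocorrelation set: $\mathcal{C}=\{\epsilon\}\cup\{e\in\mathcal{A}^+: |e|<\ell,\ \exists e'\in\mathcal{A}^+,\ we=e'w\}$, $\mathcal{C}_\circ=\mathcal{C}\setminus\{\epsilon\}$, $\mathcal{K}=\mathcal{C}_\circ\setminus\mathcal{C}_\circ\mathcal{A}^+$, with generating functions $C(z)$, $K(z)$. Languages: $\mathcal{R}=\{r\in\mathcal{A}^*w: \text{no } r=xwy,\ |y|>0\}$; $\mathcal{M}=\{m\in\mathcal{A}^+: wm\in\mathcal{A}^*w,\ \text{no } wm=xwy,\ |x|>0,|y|>0\}$; $\mathcal{U}=\{u\in\mathcal{A}^*: \text{no } wu=xwy,\ |x|>0\}$; $\mathcal{N}=\{n: w\text{ not a factor of }n\}$, with generating functions $R(z),M(z),U(z),N(z)$. It is known (Régnier–Szpankowski) that with $D(z)=\pi_w z^{\ell}+(1-z)C(z)$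 one has $R(z)=\pi_w z^{\ell}/D(z)$, $M(z)=1+(z-1)/D(z)$, $U(z)=1/D(z)$, $N(z)=C(z)/D(z)$. *)

theory Defs
  imports Complex_Main "HOL-Computational_Algebra.Formal_Power_Series"
begin

text \<open>Bernoulli model: alphabet = a finite type 'a, letter probabilities p.\<close>

definition prob :: "('a \<Rightarrow> real) \<Rightarrow> 'a list \<Rightarrow> real" where
  "prob p x = prod_list (map p x)"

definition gf :: "('a \<Rightarrow> real) \<Rightarrow> 'a list set \<Rightarrow> real fps" where
  "gf p L = Abs_fps (\<lambda>n. \<Sum>x\<in>{x. x \<in> L \<and> length x = n}. prob p x)"

text \<open>Starting positions (0-based) of occurrences of w in T.\<close>
definition occs :: "'a list \<Rightarrow> 'a list \<Rightarrow> nat set" where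
  "occs w T = {i. i + length w \<le> length T \<and> take (length w) (drop i T) = w}"

definition occ :: "'a list \<Rightarrow> 'a list \<Rightarrow> nat" where
  "occ w T = card (occs w T)"

definition cov :: "'a list \<Rightarrow> 'a list \<Rightarrow> nat" where
  "cov w T = card (\<Union>i\<in>occs w T. {i..<i + length w})"

definition overlap_rel :: "'a list \<Rightarrow> 'a list \<Rightarrow> (nat \<times> nat) set" where
  "overlap_rel w T = {(i, j). i \<in> occs w T \<and> j \<in> occs w T \<and>
       {i..<i + length w} \<inter> {j..<j + length w} \<noteq> {}}"

definition cl :: "'a list \<Rightarrow> 'a list \<Rightarrow> nat" where
  "cl w T = card (occs w T // trancl (overlap_rel w T))"

definition autocorr :: "'a list \<Rightarrow> 'a list set" where
  "autocorr w = {[]} \<union> {e. e \<noteq> [] \<and> length e < length w \<and> (\<exists>e'. e' \<noteq> [] \<and> w @ e = e' @ w)}"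

definition autocorr0 :: "'a list \<Rightarrow> 'a list set" where
  "autocorr0 w = autocorr w - {[]}"

definition Kset :: "'a list \<Rightarrow> 'a list set" where
  "Kset w = autocorr0 w - {c @ v | c v. c \<in> autocorr0 w \<and> v \<noteq> []}"

definition Rset :: "'a list \<Rightarrow> 'a list set" where
  "Rset w = {r. (\<exists>x. r = x @ w) \<and> \<not> (\<exists>x y. r = x @ w @ y \<and> y \<noteq> [])}"

definition Mset :: "'a list \<Rightarrow> 'a list set" where
  "Mset w = {m. m \<noteq> [] \<and> (\<exists>x. w @ m = x @ w) \<and>
      \<not> (\<exists>x y. w @ m = x @ w @ y \<and> x \<noteq> [] \<and> y \<noteq> [])}"

definition Uset :: "'a list \<Rightarrow> 'a list set" where
  "Uset w = {u. \<not> (\<exists>x y. w @ u = x @ w @ y \<and> x \<noteq> [])}"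

definition Nset :: "'a list \<Rightarrow> 'a list set" where
  "Nset w = {n. \<not> (\<exists>x y. n = x @ w @ y)}"

definition clump_words :: "'a list \<Rightarrow> 'a list set" where
  "clump_words w = {w @ concat cs | cs. set cs \<subseteq> autocorr w}"

text \<open>Trivariate series G(z,x,t,u), viewed as a series in z for given x,t,u.\<close>
definition Gser :: "('a \<Rightarrow> real) \<Rightarrow> 'a list \<Rightarrow> real \<Rightarrow> real \<Rightarrow> real \<Rightarrow> real fps" where
  "Gser p w x t u = Abs_fps (\<lambda>n. \<Sum>T\<in>{T. length T = n}.
      prob p T * x ^ occ w T * t ^ cov w T * u ^ cl w T)"

definition Kfrak :: "('a \<Rightarrow> real) \<Rightarrow> 'a list \<Rightarrow> real \<Rightarrow> real \<Rightarrow> real fps" where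
  "Kfrak p w x t =
     (fps_const x * fps_const (prob p w) * (fps_const t * fps_X) ^ length w) /
     (1 - fps_const x * fps_compose (gf p (Kset w)) (fps_const t * fps_X))"

definition Fser :: "('a \<Rightarrow> real) \<Rightarrow> 'a list \<Rightarrow> real fps \<Rightarrow> real fps" where
  "Fser p w y = gf p (Nset w) +
     gf p (Rset w) / (fps_const (prob p w) * fps_X ^ length w) * y *
     (1 / (1 - (gf p (Mset w) - gf p (Kset w)) / (fps_const (prob p w) * fps_X ^ length w) * y)) *
     gf p (Uset w)"

definition clump_ser :: "('a \<Rightarrow> real) \<Rightarrow> 'a list \<Rightarrow> real \<Rightarrow> real \<Rightarrow> real fps" where
  "clump_ser p w x t = Abs_fps (\<lambda>n. \<Sum>c\<in>{c. c \<in> clump_words w \<and> length c = n}.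
      prob p c * t ^ n * x ^ occ w c)"

end

theory Submission
  imports Defs
begin

unbundle fps_syntax


definition gfw :: "('a list \<Rightarrow> real) \<Rightarrow> 'a list set \<Rightarrow> real fps" where
  "gfw f L = Abs_fps (\<lambda>n. \<Sum>x\<in>{x. x \<in> L \<and> length x = n}. f x)"

lemma fin_len: "finite {x::'a::finite list. x \<in> L \<and> length x = n}"
proof -
  have "{x::'a list. x \<in> L \<and> length x = n} \<subseteq> {xs. set xs \<subseteq> UNIV \<and> length xs = n}" by auto
  thus ?thesis using finite_lists_length_eq[OF finite_UNIV, of n] finite_subset by blast
qed

lemma gfw_nth: "gfw f L $ n = (\<Sum>x\<in>{x. x \<in> L \<and> length x = n}. f x)"
  by (simp add: gfw_def)

lemma gf_gfw: "gf p L = gfw (prob p) L"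
  by (simp add: gf_def gfw_def)

lemma gfw_cong: "(\<And>x. x \<in> L \<Longrightarrow> f x = g x) \<Longrightarrow> gfw f L = gfw g L"
  by (auto simp: gfw_def intro!: fps_ext sum.cong)

lemma gfw_union:
  fixes A B :: "'a::finite list set"
  assumes "A \<inter> B = {}"
  shows "gfw f (A \<union> B) = gfw f A + gfw f B"
proof (rule fps_ext)
  fix n
  have "{x. x \<in> A \<union> B \<and> length x = n} = {x. x \<in> A \<and> length x = n} \<union> {x. x \<in> B \<and> length x = n}" by auto
  thus "gfw f (A \<union> B) $ n = (gfw f A + gfw f B) $ n"
    using assms by (simp add: gfw_nth sum.union_disjoint fin_len disjoint_iff)
qed

lemma gfw_const: "gfw (\<lambda>x. c * f x) L = fps_const c * gfw f L"
  by (auto simp: gfw_def sum_distrib_left intro!: fps_ext)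

lemma gfw_single: "gfw f {v} = fps_const (f v) * fps_X ^ length v"
proof (rule fps_ext)
  fix n
  have "{x. x \<in> {v} \<and> length x = n} = (if n = length v then {v} else {})" by auto
  thus "gfw f {v} $ n = (fps_const (f v) * fps_X ^ length v) $ n"
    by (simp add: gfw_nth fps_X_power_mult_nth)
qed

lemma gfw_mult:
  fixes A B :: "'a::finite list set"
  assumes inj: "inj_on (\<lambda>(a,b). a @ b) (A \<times> B)"
    and L: "L = (\<lambda>(a,b). a @ b) ` (A \<times> B)"
    and f: "\<And>a b. a \<in> A \<Longrightarrow> b \<in> B \<Longrightarrow> f (a @ b) = g a * h b"
  shows "gfw f L = gfw g A * gfw h B"
proof (rule fps_ext)
  fix n
  let ?P = "{(a,b). a \<in> A \<and> b \<in> B \<and> length a + length b = n}"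
  have Ln: "{x. x \<in> L \<and> length x = n} = (\<lambda>(a,b). a @ b) ` ?P"
    using L by auto
  have "gfw f L $ n = (\<Sum>x\<in>(\<lambda>(a,b). a @ b) ` ?P. f x)" by (simp add: gfw_nth Ln)
  also have "\<dots> = (\<Sum>(a,b)\<in>?P. f (a @ b))"
    by (subst sum.reindex) (auto intro: inj_on_subset[OF inj] simp: case_prod_beta)
  also have "\<dots> = (\<Sum>(a,b)\<in>?P. g a * h b)"
    by (rule sum.cong) (auto simp: f)
  also have "?P = (\<Union>i\<in>{0..n}. {a. a \<in> A \<and> length a = i} \<times> {b. b \<in> B \<and> length b = n - i})"
    by auto
  also have "(\<Sum>(a,b)\<in>\<dots>. g a * h b) = (\<Sum>i\<in>{0..n}. \<Sum>(a,b)\<in>{a. a \<in> A \<and> length a = i} \<times> {b. b \<in> B \<and> length b = n - i}. g a * h b)"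
    by (rule sum.UNION_disjoint) (auto simp: fin_len)
  also have "\<dots> = (gfw g A * gfw h B) $ n"
    by (simp add: fps_mult_nth gfw_nth sum_product sum.cartesian_product)
  finally show "gfw f L $ n = (gfw g A * gfw h B) $ n" .
qed



definition ovr :: "nat \<Rightarrow> nat set \<Rightarrow> (nat \<times> nat) set" where
  "ovr l Q = {(i, k). i \<in> Q \<and> k \<in> Q \<and> {i..<i + l} \<inter> {k..<k + l} \<noteq> {}}"

lemma ovr_iff: "(i,k) \<in> ovr l Q \<longleftrightarrow> i \<in> Q \<and> k \<in> Q \<and> i < k + l \<and> k < i + l"
proof -
  have "{i..<i + l} \<inter> {k..<k + l} \<noteq> {} \<longleftrightarrow> i < k + l \<and> k < i + l"
  proof
    assume "{i..<i + l} \<inter> {k..<k + l} \<noteq> {}"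
    then obtain z where "z \<in> {i..<i + l}" "z \<in> {k..<k + l}" by blast
    thus "i < k + l \<and> k < i + l" by auto
  next
    assume "i < k + l \<and> k < i + l"
    hence "max i k \<in> {i..<i + l} \<inter> {k..<k + l}" by auto
    thus "{i..<i + l} \<inter> {k..<k + l} \<noteq> {}" by blast
  qed
  thus ?thesis by (auto simp: ovr_def)
qed

lemma equiv_ovr: assumes "l > 0" shows "equiv Q ((ovr l Q)\<^sup>+)"
proof (rule equivI)
  have sub: "ovr l Q \<subseteq> Q \<times> Q" by (auto simp: ovr_iff)
  show "(ovr l Q)\<^sup>+ \<subseteq> Q \<times> Q" using trancl_subset_Sigma[OF sub] .
  show "refl_on Q ((ovr l Q)\<^sup>+)"
  proof (rule refl_onI)
    fix x assume "x \<in> Q" thus "(x, x) \<in> (ovr l Q)\<^sup>+" using assms by (auto simp: ovr_iff)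
  qed
  show "sym ((ovr l Q)\<^sup>+)" by (rule sym_trancl) (auto simp: sym_def ovr_iff)
  show "trans ((ovr l Q)\<^sup>+)" by (rule trans_trancl)
qed

lemma trancl_proj:
  assumes "\<And>a b. (a,b) \<in> r' \<Longrightarrow> (\<pi> a, \<pi> b) \<in> r" and "(a,b) \<in> r'\<^sup>+"
  shows "(\<pi> a, \<pi> b) \<in> r\<^sup>+"
  using assms(2)
proof (induction rule: trancl_induct)
  case (base y) thus ?case using assms(1) by blast
next
  case (step y z) thus ?case using assms(1) by (meson trancl_into_trancl)
qed

lemma card_image_eqrel:
  assumes "\<And>x y. x \<in> Q \<Longrightarrow> y \<in> Q \<Longrightarrow> f x = f y \<longleftrightarrow> g x = g y"
  shows "card (f ` Q) = card (g ` Q)"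
proof -
  let ?h = "\<lambda>C. f (inv_into Q g C)"
  have img: "f ` Q = ?h ` (g ` Q)"
  proof -
    have "?h (g x) = f x" if "x \<in> Q" for x
      using assms[of "inv_into Q g (g x)" x] that inv_into_into[of "g x" g Q] f_inv_into_f[of "g x" g Q]
      by auto
    thus ?thesis by (auto simp: image_image)
  qed
  have "inj_on ?h (g ` Q)"
  proof (rule inj_onI)
    fix a b assume "a \<in> g ` Q" "b \<in> g ` Q" "?h a = ?h b"
    then obtain x y where xy: "x \<in> Q" "y \<in> Q" "a = g x" "b = g y" by blast
    have "?h (g x) = f x" "?h (g y) = f y"
      using assms[of "inv_into Q g (g x)" x] inv_into_into[of "g x" g Q] f_inv_into_f[of "g x" g Q]
        assms[of "inv_into Q g (g y)" y] inv_into_into[of "g y" g Q] f_inv_into_f[of "g y" g Q] xy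
      by auto
    thus "a = b" using \<open>?h a = ?h b\<close> xy assms by auto
  qed
  thus ?thesis using img card_image by metis
qed

lemma quot_img: "A // r = (\<lambda>x. r``{x}) ` A"
  by (auto simp: quotient_def)

lemma cl_step:
  assumes fin: "finite Q" and lt: "\<And>i. i \<in> Q \<Longrightarrow> i < j" and l: "l > 0"
  shows "card (insert j Q // (ovr l (insert j Q))\<^sup>+) =
         card (Q // (ovr l Q)\<^sup>+) + (if (\<forall>i\<in>Q. i + l \<le> j) then 1 else 0)"
proof -
  let ?Q' = "insert j Q"
  let ?r = "ovr l Q" and ?r' = "ovr l ?Q'"
  have jO: "j \<notin> Q" using lt by blast
  have eqv: "equiv Q (?r\<^sup>+)" "equiv ?Q' (?r'\<^sup>+)" using equiv_ovr[OF l] by blast+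
  have sub: "?r\<^sup>+ \<subseteq> ?r'\<^sup>+" by (rule trancl_mono_subset) (auto simp: ovr_iff)
  let ?f = "\<lambda>x. ?r'\<^sup>+ `` {x}" and ?g = "\<lambda>x. ?r\<^sup>+ `` {x}"
  have key: "card (?f ` Q) = card (?g ` Q)" if H: "\<And>x y. x \<in> Q \<Longrightarrow> y \<in> Q \<Longrightarrow> (x,y) \<in> ?r'\<^sup>+ \<Longrightarrow> (x,y) \<in> ?r\<^sup>+"
  proof (rule card_image_eqrel)
    fix x y assume xy: "x \<in> Q" "y \<in> Q"
    have "?f x = ?f y \<longleftrightarrow> (x,y) \<in> ?r'\<^sup>+" using eq_equiv_class_iff[OF eqv(2)] xy by auto
    also have "\<dots> \<longleftrightarrow> (x,y) \<in> ?r\<^sup>+" using H[OF xy] sub by blast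
    also have "\<dots> \<longleftrightarrow> ?g x = ?g y" using eq_equiv_class_iff[OF eqv(1)] xy by auto
    finally show "?f x = ?f y \<longleftrightarrow> ?g x = ?g y" .
  qed
  show ?thesis
  proof (cases "\<forall>i\<in>Q. i + l \<le> j")
    case True
    have stp: "(a = j \<and> b = j) \<or> (a,b) \<in> ?r" if "(a,b) \<in> ?r'" for a b
      using that True by (auto simp: ovr_iff)
    have rs: "?r\<^sup>+ \<subseteq> Q \<times> Q" by (rule trancl_subset_Sigma) (auto simp: ovr_iff)
    have inv: "(a = j \<and> b = j) \<or> (a,b) \<in> ?r\<^sup>+" if "(a,b) \<in> ?r'\<^sup>+" for a b
      using that
    proof (induction rule: trancl_induct)
      case (base y) thus ?case using stp by blast
    next
      case (step y z)
      have s2: "(y = j \<and> z = j) \<or> (y,z) \<in> ?r" using step.hyps(2) stp by blast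
      show ?case
      proof (cases "a = j \<and> y = j")
        case True
        with s2 have "z = j" using jO by (auto simp: ovr_iff)
        thus ?thesis using True by blast
      next
        case False
        hence ay: "(a,y) \<in> ?r\<^sup>+" using step.IH by blast
        hence "y \<in> Q" using rs by blast
        hence "(y,z) \<in> ?r" using s2 jO by blast
        thus ?thesis using ay by (meson trancl_into_trancl)
      qed
    qed
    have H: "\<And>x y. x \<in> Q \<Longrightarrow> y \<in> Q \<Longrightarrow> (x,y) \<in> ?r'\<^sup>+ \<Longrightarrow> (x,y) \<in> ?r\<^sup>+"
      using inv jO by blast
    have notin: "?f j \<notin> ?f ` Q"
    proof
      assume "?f j \<in> ?f ` Q"
      then obtain i where i: "i \<in> Q" "?f j = ?f i" by blast
      hence "(j,i) \<in> ?r'\<^sup>+" using eq_equiv_class_iff[OF eqv(2)] by auto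
      hence "(j,i) \<in> ?r\<^sup>+" using inv i(1) jO by blast
      thus False using rs jO by blast
    qed
    have "card (?Q' // ?r'\<^sup>+) = card (insert (?f j) (?f ` Q))" by (simp add: quot_img)
    also have "\<dots> = card (?f ` Q) + 1" using notin fin by simp
    also have "\<dots> = card (Q // ?r\<^sup>+) + 1" using key[OF H] by (simp add: quot_img)
    finally show ?thesis using True by simp
  next
    case False
    then obtain i0 where i0: "i0 \<in> Q" "j < i0 + l" by force
    define m0 where "m0 = Max Q"
    have m0: "m0 \<in> Q" "\<And>i. i \<in> Q \<Longrightarrow> i \<le> m0"
      using Max_in[OF fin] Max_ge[OF fin] i0 unfolding m0_def by blast+
    have jm: "j < m0 + l" using i0 m0 by force
    define \<pi> where "\<pi> a = (if a = j then m0 else a)" for a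
    have st: "(\<pi> a, \<pi> b) \<in> ?r" if ab: "(a,b) \<in> ?r'" for a b
    proof -
      have a: "a \<in> ?Q'" "b \<in> ?Q'" "a < b + l" "b < a + l" using ab by (auto simp: ovr_iff)
      show ?thesis
      proof (cases "a = j")
        case True
        show ?thesis
        proof (cases "b = j")
          case True
          thus ?thesis using \<open>a = j\<close> m0 l by (simp add: \<pi>_def ovr_iff)
        next
          case False
          hence "b \<in> Q" using a by simp
          hence bm: "b \<le> m0" "m0 < j" using m0 lt by auto
          have "b < m0 + l" using bm \<open>0 < l\<close> by linarith
          moreover have "m0 < b + l" using bm a \<open>a = j\<close> by linarith
          moreover have "\<pi> a = m0" "\<pi> b = b" using \<open>a = j\<close> False by (auto simp: \<pi>_def)
          ultimately show ?thesis using m0 \<open>b \<in> Q\<close> by (simp add: ovr_iff)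
        qed
      next
        case False
        hence aQ: "a \<in> Q" using a by simp
        show ?thesis
        proof (cases "b = j")
          case True
          have am: "a \<le> m0" "m0 < j" using m0 lt aQ by auto
          have "a < m0 + l" using am \<open>0 < l\<close> by linarith
          moreover have "m0 < a + l" using am a True by linarith
          moreover have "\<pi> a = a" "\<pi> b = m0" using True False by (auto simp: \<pi>_def)
          ultimately show ?thesis using m0 aQ by (simp add: ovr_iff)
        next
          case False2: False
          thus ?thesis using False a by (simp add: \<pi>_def ovr_iff)
        qed
      qed
    qed
    have H: "(x,y) \<in> ?r\<^sup>+" if xy: "x \<in> Q" "y \<in> Q" "(x,y) \<in> ?r'\<^sup>+" for x y
    proof -
      have "(\<pi> x, \<pi> y) \<in> ?r\<^sup>+" by (rule trancl_proj[OF st xy(3)])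
      moreover have "\<pi> x = x" "\<pi> y = y" using xy jO by (auto simp: \<pi>_def)
      ultimately show ?thesis by simp
    qed
    have "(j, m0) \<in> ?r'" using m0 jm lt[of m0] by (auto simp: ovr_iff)
    hence "?f j = ?f m0" using eq_equiv_class_iff[OF eqv(2)] m0 by auto
    hence "?f ` ?Q' = ?f ` Q" using m0 by auto
    hence "card (?Q' // ?r'\<^sup>+) = card (?f ` Q)" by (simp add: quot_img)
    also have "\<dots> = card (Q // ?r\<^sup>+)" using key[OF H] by (simp add: quot_img)
    finally show ?thesis using False by simp
  qed
qed



lemma occs_iff: "i \<in> occs w T \<longleftrightarrow> (\<exists>x y. T = x @ w @ y \<and> length x = i)"
proof
  assume "i \<in> occs w T"
  hence h: "i + length w \<le> length T" "take (length w) (drop i T) = w" by (auto simp: occs_def)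
  have "T = take i T @ take (length w) (drop i T) @ drop (length w) (drop i T)"
    by (metis append_take_drop_id)
  hence "T = take i T @ w @ drop (length w) (drop i T)" using h by simp
  moreover have "length (take i T) = i" using h by simp
  ultimately show "\<exists>x y. T = x @ w @ y \<and> length x = i" by blast
next
  assume "\<exists>x y. T = x @ w @ y \<and> length x = i"
  then obtain x y where "T = x @ w @ y" "length x = i" by blast
  thus "i \<in> occs w T" by (auto simp: occs_def)
qed

lemma occs_le: "i \<in> occs w T \<Longrightarrow> i + length w \<le> length T"
  by (auto simp: occs_def)

lemma occs_finite: "finite (occs w T)"
  by (rule finite_subset[of _ "{..length T}"]) (auto simp: occs_def)

lemma occs_prefix: "i \<in> occs w S \<Longrightarrow> i \<in> occs w (S @ v)"
  by (auto simp: occs_def)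

lemma occs_prefix_back: "i \<in> occs w (S @ v) \<Longrightarrow> i + length w \<le> length S \<Longrightarrow> i \<in> occs w S"
  by (auto simp: occs_def)

lemma occs_shift: "length Q \<le> i \<Longrightarrow> i \<in> occs w (Q @ U) \<longleftrightarrow> i - length Q \<in> occs w U"
  by (auto simp: occs_def)


lemma occs_shift2: "length Q + k \<in> occs w (Q @ U) \<longleftrightarrow> k \<in> occs w U"
  using occs_shift[of Q "length Q + k" w U] by simp

definition Ew :: "'a list \<Rightarrow> 'a list set" where "Ew w = {S. \<exists>x. S = x @ w}"

lemma occsI: "T = x @ w @ y \<Longrightarrow> length x \<in> occs w T"
  by (auto simp: occs_def)

lemma occsE: assumes "i \<in> occs w T" obtains x y where "T = x @ w @ y" "length x = i"
  using assms occs_iff by blast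

lemma Ew_char: "S \<in> Ew w \<longleftrightarrow> length w \<le> length S \<and> length S - length w \<in> occs w S"
proof
  assume "S \<in> Ew w" then obtain x where x: "S = x @ w" unfolding Ew_def by blast
  hence "length x \<in> occs w S" using occsI[of S x w "[]"] by simp
  thus "length w \<le> length S \<and> length S - length w \<in> occs w S" using x by simp
next
  assume h: "length w \<le> length S \<and> length S - length w \<in> occs w S"
  hence "length S - length w \<in> occs w S" by simp
  then obtain x y where xy: "S = x @ w @ y" "length x = length S - length w" by (rule occsE)
  hence "length y = 0" using h by simp
  thus "S \<in> Ew w" using xy by (auto simp: Ew_def)
qed

lemma Ew_max: assumes "S \<in> Ew w" shows "Max (occs w S) = length S - length w"
proof (rule Max_eqI)
  show "finite (occs w S)" by (rule occs_finite)
  show "length S - length w \<in> occs w S" using assms by (simp add: Ew_char)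
  fix y assume "y \<in> occs w S"
  from occs_le[OF this] show "y \<le> length S - length w" by simp
qed

lemma Nset_char: "T \<in> Nset w \<longleftrightarrow> occs w T = {}"
proof
  assume "T \<in> Nset w"
  thus "occs w T = {}" by (auto simp: Nset_def elim!: occsE)
next
  assume h: "occs w T = {}"
  show "T \<in> Nset w" unfolding Nset_def
  proof (clarsimp)
    fix x y assume "T = x @ w @ y"
    from occsI[OF this] h show False by simp
  qed
qed

lemma Uset_char: "v \<in> Uset w \<longleftrightarrow> (\<forall>k\<in>occs w (w @ v). k = 0)"
proof
  assume "v \<in> Uset w"
  thus "\<forall>k\<in>occs w (w @ v). k = 0" by (auto simp: Uset_def elim!: occsE)
next
  assume h: "\<forall>k\<in>occs w (w @ v). k = 0"
  show "v \<in> Uset w" unfolding Uset_def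
  proof (clarsimp)
    fix x y assume "w @ v = x @ w @ y" "x \<noteq> []"
    from occsI[OF this(1)] h this(2) show False by auto
  qed
qed

lemma Rset_char: "r \<in> Rset w \<longleftrightarrow> r \<in> Ew w \<and> (\<forall>k\<in>occs w r. k + length w = length r)"
proof -
  have "(\<not> (\<exists>x y. r = x @ w @ y \<and> y \<noteq> [])) \<longleftrightarrow> (\<forall>k\<in>occs w r. k + length w = length r)"
  proof
    assume h: "\<not> (\<exists>x y. r = x @ w @ y \<and> y \<noteq> [])"
    show "\<forall>k\<in>occs w r. k + length w = length r"
    proof
      fix k assume "k \<in> occs w r"
      then obtain x y where "r = x @ w @ y" "length x = k" by (rule occsE)
      thus "k + length w = length r" using h by auto
    qed
  next
    assume h: "\<forall>k\<in>occs w r. k + length w = length r"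
    show "\<not> (\<exists>x y. r = x @ w @ y \<and> y \<noteq> [])"
    proof
      assume "\<exists>x y. r = x @ w @ y \<and> y \<noteq> []"
      then obtain x y where xy: "r = x @ w @ y" "y \<noteq> []" by blast
      from occsI[OF xy(1)] h xy show False by auto
    qed
  qed
  thus ?thesis by (auto simp: Rset_def Ew_def)
qed

lemma Mset_char: "m \<in> Mset w \<longleftrightarrow> m \<noteq> [] \<and> length m \<in> occs w (w @ m) \<and>
   (\<forall>k\<in>occs w (w @ m). k = 0 \<or> k = length m)"
proof -
  have a: "(\<exists>x. w @ m = x @ w) \<longleftrightarrow> length m \<in> occs w (w @ m)"
  proof
    assume "\<exists>x. w @ m = x @ w"
    then obtain x where x: "w @ m = x @ w" by blast
    hence "length (w @ m) = length (x @ w)" by simp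
    hence "length x = length m" by simp
    with occsI[of "w @ m" x w "[]"] x show "length m \<in> occs w (w @ m)" by simp
  next
    assume "length m \<in> occs w (w @ m)"
    then obtain x y where xy: "w @ m = x @ w @ y" "length x = length m" by (rule occsE)
    hence "length (w @ m) = length (x @ w @ y)" by simp
    hence "length y = 0" using xy(2) by simp
    thus "\<exists>x. w @ m = x @ w" using xy by auto
  qed
  have b: "(\<not> (\<exists>x y. w @ m = x @ w @ y \<and> x \<noteq> [] \<and> y \<noteq> [])) \<longleftrightarrow>
      (\<forall>k\<in>occs w (w @ m). k = 0 \<or> k = length m)"
  proof
    assume h: "\<not> (\<exists>x y. w @ m = x @ w @ y \<and> x \<noteq> [] \<and> y \<noteq> [])"
    show "\<forall>k\<in>occs w (w @ m). k = 0 \<or> k = length m"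
    proof
      fix k assume "k \<in> occs w (w @ m)"
      then obtain x y where xy: "w @ m = x @ w @ y" "length x = k" by (rule occsE)
      hence xy0: "x = [] \<or> y = []" using h by blast
      have len: "length (w @ m) = length x + length w + length y" using xy by simp
      show "k = 0 \<or> k = length m"
      proof (cases "x = []")
        case True thus ?thesis using xy(2) by simp
      next
        case False hence "y = []" using xy0 by blast
        thus ?thesis using len xy(2) by simp
      qed
    qed
  next
    assume h: "\<forall>k\<in>occs w (w @ m). k = 0 \<or> k = length m"
    show "\<not> (\<exists>x y. w @ m = x @ w @ y \<and> x \<noteq> [] \<and> y \<noteq> [])"
    proof
      assume "\<exists>x y. w @ m = x @ w @ y \<and> x \<noteq> [] \<and> y \<noteq> []"
      then obtain x y where xy: "w @ m = x @ w @ y" "x \<noteq> []" "y \<noteq> []" by blast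
      have "length x \<in> occs w (w @ m)" by (rule occsI[OF xy(1)])
      hence l1: "length x = 0 \<or> length x = length m" using h by blast
      have len: "length (w @ m) = length x + length w + length y" using xy by simp
      have pos: "length x > 0" "length y > 0" using xy by auto
      show False using l1
      proof
        assume "length x = 0" thus False using pos by simp
      next
        assume "length x = length m" thus False using pos len by simp
      qed
    qed
  qed
  show ?thesis using a b by (auto simp: Mset_def)
qed



lemma Ew_split: assumes "S \<in> Ew w" shows "S = take (length S - length w) S @ w"
proof -
  from assms obtain x where "S = x @ w" by (auto simp: Ew_def)
  thus ?thesis by simp
qed

lemma Ew_len: "S \<in> Ew w \<Longrightarrow> length w \<le> length S"
  by (simp add: Ew_char)

lemma occs_EM:
  assumes S: "S \<in> Ew w" and m: "m \<in> Mset w"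
  shows "occs w (S @ m) = insert (length S + length m - length w) (occs w S)"
proof -
  define Q where "Q = take (length S - length w) S"
  have SQ: "S = Q @ w" using Ew_split[OF S] by (simp add: Q_def)
  have SmQ: "S @ m = Q @ (w @ m)" using SQ by simp
  have mc: "m \<noteq> []" "length m \<in> occs w (w @ m)" "\<forall>k\<in>occs w (w @ m). k = 0 \<or> k = length m"
    using m by (auto simp: Mset_char)
  have j: "length S + length m - length w = length Q + length m" using SQ by simp
  show ?thesis
  proof (rule set_eqI, rule iffI)
    fix i assume i: "i \<in> occs w (S @ m)"
    show "i \<in> insert (length S + length m - length w) (occs w S)"
    proof (cases "i + length w \<le> length S")
      case True thus ?thesis using occs_prefix_back[OF i] by simp
    next
      case False
      hence "length Q \<le> i" using SQ by simp
      then obtain k where k: "i = length Q + k" using le_Suc_ex by blast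
      hence "k \<in> occs w (w @ m)" using i SmQ occs_shift2[of Q k w "w @ m"] by simp
      hence "k = 0 \<or> k = length m" using mc by blast
      moreover have "k \<noteq> 0" using False k SQ by auto
      ultimately show ?thesis using k j by simp
    qed
  next
    fix i assume "i \<in> insert (length S + length m - length w) (occs w S)"
    thus "i \<in> occs w (S @ m)"
    proof
      assume "i = length S + length m - length w"
      thus ?thesis using SmQ j occs_shift2[of Q "length m" w "w @ m"] mc by simp
    qed (rule occs_prefix)
  qed
qed

lemma occs_lt_EM:
  assumes "m \<in> Mset w" "i \<in> occs w S" shows "i < length S + length m - length w"
proof -
  have "m \<noteq> []" using assms(1) by (simp add: Mset_char)
  hence "length m > 0" by simp
  thus ?thesis using occs_le[OF assms(2)] by linarith
qed

lemma Ew_append_M: assumes "S \<in> Ew w" "m \<in> Mset w" shows "S @ m \<in> Ew w"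
proof -
  have "length w \<le> length S" using Ew_len[OF assms(1)] .
  thus ?thesis using occs_EM[OF assms] by (simp add: Ew_char)
qed

lemma Ew_decomp:
  assumes S: "S \<in> Ew w" and R: "S \<notin> Rset w"
  shows "\<exists>S' m. S' \<in> Ew w \<and> m \<in> Mset w \<and> S = S' @ m"
proof -
  let ?l = "length w"
  from R S obtain k where k: "k \<in> occs w S" "k + ?l \<noteq> length S" by (auto simp: Rset_char)
  let ?O = "occs w S - {length S - ?l}"
  have kO: "k \<in> ?O" using k occs_le[OF k(1)] by auto
  have finO: "finite ?O" using occs_finite by blast
  define k0 where "k0 = Max ?O"
  have k0: "k0 \<in> ?O" "\<And>i. i \<in> ?O \<Longrightarrow> i \<le> k0"
    using Max_in[OF finO] Max_ge[OF finO] kO unfolding k0_def by blast+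
  have k0l: "k0 + ?l < length S" using k0(1) occs_le[of k0 w S] by auto
  define S' where "S' = take (k0 + ?l) S"
  define m where "m = drop (k0 + ?l) S"
  have Sm: "S = S' @ m" by (simp add: S'_def m_def)
  have lenS': "length S' = k0 + ?l" using k0l by (simp add: S'_def)
  have "k0 \<in> occs w S'" using occs_prefix_back[of k0 w S' m] k0(1) Sm lenS' by simp
  hence S'E: "S' \<in> Ew w" using lenS' by (simp add: Ew_char)
  have mne: "m \<noteq> []" using k0l by (simp add: m_def)
  have tk: "take ?l (drop k0 S) = w" using k0(1) by (auto simp: occs_def)
  have "drop k0 S = take ?l (drop k0 S) @ drop ?l (drop k0 S)" by (metis append_take_drop_id)
  hence "drop k0 S = w @ m" using tk by (simp add: m_def add.commute)
  hence SP: "S = take k0 S @ (w @ m)" by (metis append_take_drop_id)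
  have lP: "length (take k0 S) = k0" using k0l by simp
  have sh: "k \<in> occs w (w @ m) \<longleftrightarrow> k0 + k \<in> occs w S" for k
    using occs_shift2[of "take k0 S" k w "w @ m"] SP lP by simp
  have lS: "length S = k0 + ?l + length m" using Sm lenS' by simp
  have "m \<in> Mset w" unfolding Mset_char
  proof (intro conjI ballI mne)
    have "k0 + length m = length S - ?l" using lS by simp
    moreover have "length S - ?l \<in> occs w S" using S by (simp add: Ew_char)
    ultimately show "length m \<in> occs w (w @ m)" using sh by simp
  next
    fix k assume "k \<in> occs w (w @ m)"
    hence kk: "k0 + k \<in> occs w S" using sh by simp
    show "k = 0 \<or> k = length m"
    proof (cases "k0 + k = length S - ?l")
      case True thus ?thesis using lS by simp
    next
      case False
      hence "k0 + k \<le> k0" using k0(2)[of "k0 + k"] kk by simp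
      thus ?thesis by simp
    qed
  qed
  thus ?thesis using S'E Sm by blast
qed

lemma Ew_inj:
  assumes "S1 \<in> Ew w" "m1 \<in> Mset w" "S2 \<in> Ew w" "m2 \<in> Mset w" "S1 @ m1 = S2 @ m2"
  shows "S1 = S2 \<and> m1 = m2"
proof -
  have key: "Max (occs w (S @ m) - {length (S @ m) - length w}) = length S - length w"
    if "S \<in> Ew w" "m \<in> Mset w" for S m
  proof -
    have "length w \<le> length S" using Ew_len[OF that(1)] .
    hence "length (S @ m) - length w = length S + length m - length w" by simp
    moreover have "length S + length m - length w \<notin> occs w S" using occs_lt_EM[OF that(2)] by blast
    ultimately have "occs w (S @ m) - {length (S @ m) - length w} = occs w S"
      using occs_EM[OF that] by auto
    thus ?thesis using Ew_max[OF that(1)] by simp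
  qed
  have "length S1 - length w = length S2 - length w" using key[OF assms(1,2)] key[OF assms(3,4)] assms(5) by simp
  moreover have "length w \<le> length S1" "length w \<le> length S2" using Ew_len assms by blast+
  ultimately have "length S1 = length S2" by simp
  thus ?thesis using assms(5) by simp
qed

lemma occs_EU:
  assumes S: "S \<in> Ew w" and v: "v \<in> Uset w"
  shows "occs w (S @ v) = occs w S"
proof (rule set_eqI, rule iffI)
  define Q where "Q = take (length S - length w) S"
  have SQ: "S = Q @ w" using Ew_split[OF S] by (simp add: Q_def)
  fix i assume i: "i \<in> occs w (S @ v)"
  show "i \<in> occs w S"
  proof (cases "i + length w \<le> length S")
    case True thus ?thesis using occs_prefix_back[OF i] by simp
  next
    case False
    hence "length Q \<le> i" using SQ by simp
    then obtain k where k: "i = length Q + k" using le_Suc_ex by blast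
    hence "k \<in> occs w (w @ v)" using i SQ occs_shift2[of Q k w "w @ v"] by simp
    hence "k = 0" using v by (simp add: Uset_char)
    thus ?thesis using False k SQ by auto
  qed
qed (rule occs_prefix)

lemma NU_decomp:
  assumes "T \<notin> Nset w"
  shows "\<exists>S v. S \<in> Ew w \<and> v \<in> Uset w \<and> T = S @ v"
proof -
  let ?l = "length w"
  have ne: "occs w T \<noteq> {}" using assms by (simp add: Nset_char)
  define i where "i = Max (occs w T)"
  have i: "i \<in> occs w T" "\<And>k. k \<in> occs w T \<Longrightarrow> k \<le> i"
    using Max_in[OF occs_finite ne] Max_ge[OF occs_finite] unfolding i_def by blast+
  have il: "i + ?l \<le> length T" using occs_le[OF i(1)] .
  define S where "S = take (i + ?l) T"
  define v where "v = drop (i + ?l) T"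
  have Tv: "T = S @ v" by (simp add: S_def v_def)
  have lenS: "length S = i + ?l" using il by (simp add: S_def)
  have "i \<in> occs w S" using occs_prefix_back[of i w S v] i(1) Tv lenS by simp
  hence SE: "S \<in> Ew w" using lenS by (simp add: Ew_char)
  have tk: "take ?l (drop i T) = w" using i(1) by (auto simp: occs_def)
  have "drop i T = take ?l (drop i T) @ drop ?l (drop i T)" by (metis append_take_drop_id)
  hence "drop i T = w @ v" using tk by (simp add: v_def add.commute)
  hence TP: "T = take i T @ (w @ v)" by (metis append_take_drop_id)
  have lP: "length (take i T) = i" using il by simp
  have "v \<in> Uset w" unfolding Uset_char
  proof
    fix k assume "k \<in> occs w (w @ v)"
    hence "i + k \<in> occs w T" using occs_shift2[of "take i T" k w "w @ v"] TP lP by simp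
    thus "k = 0" using i(2) by fastforce
  qed
  thus ?thesis using SE Tv by blast
qed

lemma NU_inj:
  assumes "S1 \<in> Ew w" "v1 \<in> Uset w" "S2 \<in> Ew w" "v2 \<in> Uset w" "S1 @ v1 = S2 @ v2"
  shows "S1 = S2 \<and> v1 = v2"
proof -
  have "length S1 - length w = length S2 - length w"
    using Ew_max[OF assms(1)] Ew_max[OF assms(3)] occs_EU[OF assms(1,2)] occs_EU[OF assms(3,4)] assms(5)
    by simp
  moreover have "length w \<le> length S1" "length w \<le> length S2" using Ew_len assms by blast+
  ultimately have "length S1 = length S2" by simp
  thus ?thesis using assms(5) by simp
qed



lemma ac0_char: "e \<in> autocorr0 w \<longleftrightarrow> e \<noteq> [] \<and> length e < length w \<and> (\<exists>x. w @ e = x @ w)"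
proof -
  have "(\<exists>x. x \<noteq> [] \<and> w @ e = x @ w) \<longleftrightarrow> (\<exists>x. w @ e = x @ w)" if "e \<noteq> []"
  proof
    assume "\<exists>x. w @ e = x @ w"
    then obtain x where x: "w @ e = x @ w" by blast
    hence "length (w @ e) = length (x @ w)" by simp
    hence "length x = length e" by simp
    thus "\<exists>x. x \<noteq> [] \<and> w @ e = x @ w" using x that by auto
  qed blast
  thus ?thesis by (auto simp: autocorr0_def autocorr_def)
qed

lemma Kset_char: "Kset w = {m \<in> Mset w. length m < length w}"
proof (rule set_eqI, rule iffI)
  fix k assume k: "k \<in> Kset w"
  hence kac: "k \<in> autocorr0 w" and nd: "\<not> (\<exists>c v. k = c @ v \<and> c \<in> autocorr0 w \<and> v \<noteq> [])"
    by (auto simp: Kset_def)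
  from kac have k1: "k \<noteq> []" "length k < length w" "\<exists>x. w @ k = x @ w" by (auto simp: ac0_char)
  have "\<not> (\<exists>x y. w @ k = x @ w @ y \<and> x \<noteq> [] \<and> y \<noteq> [])"
  proof
    assume "\<exists>x y. w @ k = x @ w @ y \<and> x \<noteq> [] \<and> y \<noteq> []"
    then obtain x y where xy: "w @ k = x @ w @ y" "x \<noteq> []" "y \<noteq> []" by blast
    have len: "length w + length k = length x + length w + length y" using arg_cong[OF xy(1), of length] by simp
    hence lx: "length x < length k" using xy(3) by simp
    have "take (length x + length w) (w @ k) = take (length x + length w) (x @ w @ y)" using xy(1) by simp
    hence "w @ take (length x) k = x @ w" by (simp add: add.commute)
    hence "take (length x) k \<in> autocorr0 w" using xy(2) lx k1(2) by (auto simp: ac0_char)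
    moreover have "k = take (length x) k @ drop (length x) k" by simp
    moreover have "drop (length x) k \<noteq> []" using lx by simp
    ultimately show False using nd by blast
  qed
  thus "k \<in> {m \<in> Mset w. length m < length w}" using k1 by (auto simp: Mset_def)
next
  fix m assume "m \<in> {m \<in> Mset w. length m < length w}"
  hence m: "m \<in> Mset w" "length m < length w" by auto
  hence mac: "m \<in> autocorr0 w" by (auto simp: Mset_def ac0_char)
  have "\<not> (\<exists>c v. m = c @ v \<and> c \<in> autocorr0 w \<and> v \<noteq> [])"
  proof
    assume "\<exists>c v. m = c @ v \<and> c \<in> autocorr0 w \<and> v \<noteq> []"
    then obtain c v where cv: "m = c @ v" "c \<in> autocorr0 w" "v \<noteq> []" by blast
    then obtain e' where e': "e' \<noteq> []" "w @ c = e' @ w" by (auto simp: autocorr0_def autocorr_def)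
    hence "w @ m = e' @ w @ v" using cv by simp
    thus False using m(1) e' cv(3) by (auto simp: Mset_def)
  qed
  thus "m \<in> Kset w" using mac by (auto simp: Kset_def)
qed

lemma ac0_concat: "e \<in> autocorr0 w \<Longrightarrow> \<exists>ks. set ks \<subseteq> Kset w \<and> e = concat ks"
proof (induction "length e" arbitrary: e rule: less_induct)
  case less
  show ?case
  proof (cases "e \<in> Kset w")
    case True thus ?thesis by (intro exI[of _ "[e]"]) simp
  next
    case False
    then obtain c v where cv: "e = c @ v" "c \<in> autocorr0 w" "v \<noteq> []"
      using less.prems by (auto simp: Kset_def)
    have e1: "e \<noteq> []" "length e < length w" "\<exists>x. w @ e = x @ w" using less.prems by (auto simp: ac0_char)
    have c1: "c \<noteq> []" "\<exists>x. w @ c = x @ w" using cv(2) by (auto simp: ac0_char)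
    obtain e' where e': "w @ e = e' @ w" using e1 by blast
    obtain c' where c': "w @ c = c' @ w" using c1 by blast
    have lc': "length c' = length c" using arg_cong[OF c', of length] by simp
    have le': "length e' = length e" using arg_cong[OF e', of length] by simp
    have "c' @ (w @ v) = (w @ c) @ v" using c' by simp
    also have "\<dots> = e' @ w" using e' cv(1) by simp
    finally have "c' @ (w @ v) = e' @ w" .
    hence "drop (length c) (c' @ (w @ v)) = drop (length c) (e' @ w)" by simp
    hence "w @ v = drop (length c) e' @ w" using lc' le' cv(1) by simp
    hence vac: "v \<in> autocorr0 w" using cv e1 by (auto simp: ac0_char)
    have "length c < length e" "length v < length e" using cv c1 by auto
    then obtain ks1 ks2 where "set ks1 \<subseteq> Kset w" "c = concat ks1" "set ks2 \<subseteq> Kset w" "v = concat ks2"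
      using less.hyps cv(2) vac by meson
    thus ?thesis using cv(1) by (intro exI[of _ "ks1 @ ks2"]) auto
  qed
qed

lemma Kset_sub_ac: "Kset w \<subseteq> autocorr w"
  by (auto simp: Kset_def autocorr0_def)

lemma clump_words_K: "clump_words w = {w @ concat ks | ks. set ks \<subseteq> Kset w}"
proof (rule set_eqI, rule iffI)
  fix c assume "c \<in> clump_words w"
  then obtain cs where c: "c = w @ concat cs" "set cs \<subseteq> autocorr w" by (auto simp: clump_words_def)
  have "\<exists>ks. set ks \<subseteq> Kset w \<and> concat cs = concat ks" using c(2)
  proof (induction cs)
    case Nil thus ?case by (intro exI[of _ "[]"]) simp
  next
    case (Cons e cs)
    then obtain ks where ks: "set ks \<subseteq> Kset w" "concat cs = concat ks" by auto
    have "e \<in> autocorr w" using Cons.prems by simp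
    hence "e = [] \<or> e \<in> autocorr0 w" by (auto simp: autocorr0_def)
    thus ?case
    proof
      assume "e = []" thus ?case using ks by auto
    next
      assume "e \<in> autocorr0 w"
      then obtain ks' where "set ks' \<subseteq> Kset w" "e = concat ks'" using ac0_concat by blast
      thus ?case using ks by (intro exI[of _ "ks' @ ks"]) auto
    qed
  qed
  thus "c \<in> {w @ concat ks | ks. set ks \<subseteq> Kset w}" using c(1) by auto
next
  fix c assume "c \<in> {w @ concat ks | ks. set ks \<subseteq> Kset w}"
  thus "c \<in> clump_words w" using Kset_sub_ac by (auto simp: clump_words_def)
qed

lemma Kset_sub_M: "Kset w \<subseteq> Mset w"
  by (auto simp: Kset_char)

lemma clump_Ew: "c \<in> clump_words w \<Longrightarrow> c \<in> Ew w"
proof -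
  have "set ks \<subseteq> Kset w \<Longrightarrow> w @ concat ks \<in> Ew w" for ks
  proof (induction ks rule: rev_induct)
    case Nil thus ?case by (auto simp: Ew_def)
  next
    case (snoc k ks)
    hence "w @ concat ks \<in> Ew w" "k \<in> Mset w" using Kset_sub_M by auto
    from Ew_append_M[OF this] show ?case by simp
  qed
  thus "c \<in> clump_words w \<Longrightarrow> c \<in> Ew w" by (auto simp: clump_words_K)
qed

lemma clump_rec: "clump_words w = {w} \<union> (\<lambda>(a,b). a @ b) ` (clump_words w \<times> Kset w)"
proof (rule set_eqI, rule iffI)
  fix c assume "c \<in> clump_words w"
  then obtain ks where c: "c = w @ concat ks" "set ks \<subseteq> Kset w" by (auto simp: clump_words_K)
  show "c \<in> {w} \<union> (\<lambda>(a,b). a @ b) ` (clump_words w \<times> Kset w)"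
  proof (cases ks rule: rev_cases)
    case Nil thus ?thesis using c by simp
  next
    case (snoc ks' k)
    hence "w @ concat ks' \<in> clump_words w" "k \<in> Kset w" using c by (auto simp: clump_words_K)
    moreover have "c = (w @ concat ks') @ k" using c snoc by simp
    ultimately show ?thesis by blast
  qed
next
  fix c assume "c \<in> {w} \<union> (\<lambda>(a,b). a @ b) ` (clump_words w \<times> Kset w)"
  thus "c \<in> clump_words w"
  proof
    assume "c \<in> {w}" thus ?thesis by (auto simp: clump_words_K intro: exI[of _ "[]"])
  next
    assume "c \<in> (\<lambda>(a,b). a @ b) ` (clump_words w \<times> Kset w)"
    then obtain a k where ak: "c = a @ k" "a \<in> clump_words w" "k \<in> Kset w" by auto
    then obtain ks where "a = w @ concat ks" "set ks \<subseteq> Kset w" by (auto simp: clump_words_K)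
    thus ?thesis using ak by (auto simp: clump_words_K intro!: exI[of _ "ks @ [k]"])
  qed
qed



lemma cl_eq: "cl w T = card (occs w T // (ovr (length w) (occs w T))\<^sup>+)"
  by (simp add: cl_def overlap_rel_def ovr_def)

lemma prob_append: "prob p (a @ b) = prob p a * prob p b"
  by (simp add: prob_def)

lemma prob_pos: "(\<And>a. p a > 0) \<Longrightarrow> prob p v > 0"
  by (induction v) (auto simp: prob_def)

lemma stats_EM:
  assumes S: "S \<in> Ew w" and m: "m \<in> Mset w" and w: "w \<noteq> []"
  shows "occ w (S @ m) = Suc (occ w S)"
    and "cl w (S @ m) = cl w S + (if length w \<le> length m then 1 else 0)"
    and "cov w (S @ m) = cov w S + min (length m) (length w)"
proof -
  let ?l = "length w" and ?O = "occs w S"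
  let ?j = "length S + length m - length w"
  have oc: "occs w (S @ m) = insert ?j ?O" by (rule occs_EM[OF S m])
  have lt: "\<And>i. i \<in> ?O \<Longrightarrow> i < ?j" using occs_lt_EM[OF m] by blast
  have jn: "?j \<notin> ?O" using lt by blast
  have lS: "?l \<le> length S" using Ew_len[OF S] .
  have lS0: "length S - ?l \<in> ?O" using S by (simp add: Ew_char)
  have mne: "m \<noteq> []" using m by (simp add: Mset_char)
  show "occ w (S @ m) = Suc (occ w S)" using oc jn occs_finite[of w S] by (simp add: occ_def)
  have cond: "(\<forall>i\<in>?O. i + ?l \<le> ?j) \<longleftrightarrow> ?l \<le> length m"
  proof
    assume "\<forall>i\<in>?O. i + ?l \<le> ?j"
    hence "length S - ?l + ?l \<le> ?j" using lS0 by blast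
    thus "?l \<le> length m" using lS by simp
  next
    assume "?l \<le> length m"
    thus "\<forall>i\<in>?O. i + ?l \<le> ?j" using occs_le[of _ w S] by fastforce
  qed
  have lpos: "?l > 0" using w by simp
  show "cl w (S @ m) = cl w S + (if length w \<le> length m then 1 else 0)"
    using cl_step[OF occs_finite[of w S] lt lpos] oc cond by (simp add: cl_eq)
  let ?U = "\<Union>i\<in>?O. {i..<i + ?l}"
  have U1: "?U \<subseteq> {..<length S}" using occs_le[of _ w S] by fastforce
  have U2: "{length S - ?l..<length S} \<subseteq> ?U" using lS0 lS by fastforce
  have fU: "finite ?U" using occs_finite by blast
  have diff: "{?j..<?j + ?l} - ?U = {max ?j (length S)..<?j + ?l}"
  proof (rule set_eqI, rule iffI)
    fix z assume z: "z \<in> {?j..<?j + ?l} - ?U"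
    have "\<not> z < length S"
    proof
      assume "z < length S"
      moreover have "length S - ?l \<le> z" using z by auto
      ultimately have "z \<in> {length S - ?l..<length S}" by simp
      hence "z \<in> ?U" using U2 by (rule subsetD[rotated])
      thus False using z by blast
    qed
    thus "z \<in> {max ?j (length S)..<?j + ?l}" using z by auto
  next
    fix z assume z: "z \<in> {max ?j (length S)..<?j + ?l}"
    have "z \<notin> ?U"
    proof
      assume "z \<in> ?U"
      hence "z \<in> {..<length S}" using U1 by (rule subsetD[rotated])
      thus False using z by simp
    qed
    thus "z \<in> {?j..<?j + ?l} - ?U" using z by auto
  qed
  have "cov w (S @ m) = card ({?j..<?j + ?l} \<union> ?U)" using oc by (simp add: cov_def)
  also have "{?j..<?j + ?l} \<union> ?U = ?U \<union> ({?j..<?j + ?l} - ?U)" by blast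
  also have "card \<dots> = card ?U + card ({?j..<?j + ?l} - ?U)"
    by (rule card_Un_disjoint) (auto simp: fU)
  also have "card ({?j..<?j + ?l} - ?U) = min (length m) ?l" using diff lS by auto
  finally show "cov w (S @ m) = cov w S + min (length m) (length w)" by (simp add: cov_def)
qed

lemma stats_R:
  assumes r: "r \<in> Rset w" and w: "w \<noteq> []"
  shows "occ w r = 1" "cov w r = length w" "cl w r = 1"
proof -
  have rE: "r \<in> Ew w" and all: "\<forall>k\<in>occs w r. k + length w = length r" using r by (auto simp: Rset_char)
  have lS: "length w \<le> length r" using Ew_len[OF rE] .
  have oc: "occs w r = {length r - length w}" using all rE lS by (auto simp: Ew_char)
  show "occ w r = 1" using oc by (simp add: occ_def)
  show "cov w r = length w" using oc lS by (simp add: cov_def)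
  have "card (insert (length r - length w) {} // (ovr (length w) (insert (length r - length w) {}))\<^sup>+) =
     card ({} // (ovr (length w) {})\<^sup>+) + (if (\<forall>i\<in>{}. i + length w \<le> length r - length w) then 1 else 0)"
    by (rule cl_step) (use w in auto)
  thus "cl w r = 1" using oc by (simp add: cl_eq quotient_def)
qed

lemma stats_N:
  assumes "T \<in> Nset w"
  shows "occ w T = 0" "cov w T = 0" "cl w T = 0"
  using assms by (auto simp: Nset_char occ_def cov_def cl_eq quotient_def)

lemma stats_EU:
  assumes "S \<in> Ew w" "v \<in> Uset w"
  shows "occ w (S @ v) = occ w S" "cov w (S @ v) = cov w S" "cl w (S @ v) = cl w S"
  using occs_EU[OF assms] by (simp_all add: occ_def cov_def cl_eq)



lemma KK_eq: "fps_compose (gf p (Kset w)) (fps_const t * fps_X) = gfw (\<lambda>k. prob p k * t ^ length k) (Kset w)"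
proof (rule fps_ext)
  fix n
  have "fps_compose (gf p (Kset w)) (fps_const t * fps_X) $ n = t ^ n * gf p (Kset w) $ n"
    by (simp add: fps_compose_linear)
  also have "\<dots> = (\<Sum>k\<in>{k. k \<in> Kset w \<and> length k = n}. prob p k * t ^ length k)"
    by (simp add: gf_def sum_distrib_left mult.commute)
  finally show "fps_compose (gf p (Kset w)) (fps_const t * fps_X) $ n = gfw (\<lambda>k. prob p k * t ^ length k) (Kset w) $ n"
    by (simp add: gfw_nth)
qed

lemma clump_ser_eq: "clump_ser p w x t = gfw (\<lambda>c. prob p c * t ^ length c * x ^ occ w c) (clump_words w)"
  unfolding clump_ser_def gfw_def by (intro fps_ext) (auto intro!: sum.cong)

lemma Gser_eq: "Gser p w x t u = gfw (\<lambda>T. prob p T * x ^ occ w T * t ^ cov w T * u ^ cl w T) UNIV"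
  unfolding Gser_def gfw_def by simp

lemma w_R: "w \<noteq> [] \<Longrightarrow> w \<in> Rset w"
proof -
  assume w: "w \<noteq> []"
  have "w \<in> Ew w" by (auto simp: Ew_def)
  moreover have "\<forall>k\<in>occs w w. k + length w = length w" using occs_le[of _ w w] by fastforce
  ultimately show ?thesis by (simp add: Rset_char)
qed

lemma M_nonempty_nth0: "gfw f (Mset w) $ 0 = 0"
proof -
  have e: "{x. x \<in> Mset w \<and> length x = 0} = {}" by (auto simp: Mset_char)
  have "gfw f (Mset w) $ 0 = (\<Sum>x\<in>{x. x \<in> Mset w \<and> length x = 0}. f x)" by (rule gfw_nth)
  also have "\<dots> = 0" unfolding e by simp
  finally show ?thesis .
qed

lemma clump_identity:
  fixes w :: "'a::finite list" and p :: "'a \<Rightarrow> real" and x t u :: real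
  assumes w: "w \<noteq> []"
  defines "\<psi> \<equiv> \<lambda>c. prob p c * t ^ length c * x ^ occ w c"
  shows "gfw \<psi> (clump_words w) = fps_const (prob p w * t ^ length w * x) * fps_X ^ length w +
           gfw \<psi> (clump_words w) * (fps_const x * gfw (\<lambda>k. prob p k * t ^ length k) (Kset w))"
proof -
  let ?I = "(\<lambda>(a,b). a @ b) ` (clump_words w \<times> Kset w)"
  have disj: "{w} \<inter> ?I = {}"
  proof -
    have "a @ k \<noteq> w" if "a \<in> clump_words w" "k \<in> Kset w" for a k
    proof -
      have "length w \<le> length a" using Ew_len[OF clump_Ew[OF that(1)]] .
      moreover have "length k > 0" using that(2) Kset_sub_M[of w] by (auto simp: Mset_char)
      ultimately have "length (a @ k) > length w" unfolding length_append by linarith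
      thus ?thesis by auto
    qed
    thus ?thesis by auto
  qed
  have inj: "inj_on (\<lambda>(a,b). a @ b) (clump_words w \<times> Kset w)"
  proof (rule inj_onI, clarify)
    fix a k a' k' assume h: "a \<in> clump_words w" "k \<in> Kset w" "a' \<in> clump_words w" "k' \<in> Kset w" "a @ k = a' @ k'"
    have "k \<in> Mset w" "k' \<in> Mset w" using h Kset_sub_M by auto
    thus "a = a' \<and> k = k'" using Ew_inj[OF clump_Ew[OF h(1)] _ clump_Ew[OF h(3)] _ h(5)] by blast
  qed
  have mult: "\<psi> (a @ k) = \<psi> a * (x * (prob p k * t ^ length k))" if "a \<in> clump_words w" "k \<in> Kset w" for a k
  proof -
    have "k \<in> Mset w" using that(2) Kset_sub_M by auto
    hence "occ w (a @ k) = Suc (occ w a)" using stats_EM(1)[OF clump_Ew[OF that(1)] _ w] by blast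
    hence "\<psi> (a @ k) = (prob p a * prob p k) * (t ^ length a * t ^ length k) * (x ^ occ w a * x)"
      unfolding \<psi>_def by (simp add: prob_append power_add)
    thus ?thesis unfolding \<psi>_def by (simp add: algebra_simps)
  qed
  have "gfw \<psi> (clump_words w) = gfw \<psi> {w} + gfw \<psi> ?I"
    by (subst clump_rec) (rule gfw_union[OF disj])
  also have "gfw \<psi> {w} = fps_const (prob p w * t ^ length w * x) * fps_X ^ length w"
    using stats_R(1)[OF w_R[OF w] w] by (simp add: gfw_single \<psi>_def)
  also have "gfw \<psi> ?I = gfw \<psi> (clump_words w) * gfw (\<lambda>k. x * (prob p k * t ^ length k)) (Kset w)"
    by (rule gfw_mult[where f=\<psi> and g=\<psi> and h="\<lambda>k. x * (prob p k * t ^ length k)", OF inj refl mult])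
  also have "gfw (\<lambda>k. x * (prob p k * t ^ length k)) (Kset w) = fps_const x * gfw (\<lambda>k. prob p k * t ^ length k) (Kset w)"
    by (rule gfw_const)
  finally show ?thesis .
qed

lemma LW_identity:
  fixes w :: "'a::finite list" and p :: "'a \<Rightarrow> real" and x t u :: real
  assumes w: "w \<noteq> []"
  defines "wt \<equiv> \<lambda>T. prob p T * x ^ occ w T * t ^ cov w T * u ^ cl w T"
  shows "gfw wt (Ew w) = fps_const (x * t ^ length w * u) * gf p (Rset w) +
     gfw wt (Ew w) * (fps_const x * gfw (\<lambda>k. prob p k * t ^ length k) (Kset w) +
                      fps_const (x * t ^ length w * u) * (gf p (Mset w) - gf p (Kset w)))"
proof -
  let ?l = "length w"
  let ?I = "(\<lambda>(a,b). a @ b) ` (Ew w \<times> Mset w)"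
  define \<phi> where "\<phi> m = prob p m * x * t ^ min (length m) ?l * (if ?l \<le> length m then u else 1)" for m
  have Eeq: "Ew w = Rset w \<union> ?I"
  proof (rule set_eqI, rule iffI)
    fix S assume S: "S \<in> Ew w"
    show "S \<in> Rset w \<union> ?I"
    proof (cases "S \<in> Rset w")
      case False
      then obtain S' m where "S' \<in> Ew w" "m \<in> Mset w" "S = S' @ m" using Ew_decomp[OF S] by blast
      thus ?thesis by blast
    qed simp
  next
    fix S assume "S \<in> Rset w \<union> ?I"
    thus "S \<in> Ew w" using Ew_append_M by (auto simp: Rset_char)
  qed
  have disj: "Rset w \<inter> ?I = {}"
  proof -
    have "S @ m \<notin> Rset w" if "S \<in> Ew w" "m \<in> Mset w" for S m
    proof
      assume "S @ m \<in> Rset w"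
      hence all: "\<forall>k\<in>occs w (S @ m). k + ?l = length (S @ m)" by (simp add: Rset_char)
      have "length S - ?l \<in> occs w (S @ m)" using that(1) by (simp add: Ew_char occs_prefix)
      hence "length S - ?l + ?l = length (S @ m)" using all by blast
      moreover have "?l \<le> length S" using Ew_len[OF that(1)] .
      moreover have "m \<noteq> []" using that(2) by (simp add: Mset_char)
      ultimately show False by simp
    qed
    thus ?thesis by auto
  qed
  have inj: "inj_on (\<lambda>(a,b). a @ b) (Ew w \<times> Mset w)"
  proof (rule inj_onI, clarify)
    fix a k a' k' assume h: "a \<in> Ew w" "k \<in> Mset w" "a' \<in> Ew w" "k' \<in> Mset w" "a @ k = a' @ k'"
    thus "a = a' \<and> k = k'" using Ew_inj[OF h] by blast
  qed
  have mult: "wt (S @ m) = wt S * \<phi> m" if "S \<in> Ew w" "m \<in> Mset w" for S m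
  proof -
    note st = stats_EM[OF that w]
    have "wt (S @ m) = (prob p S * prob p m) * (x ^ occ w S * x) * (t ^ cov w S * t ^ min (length m) ?l)
        * (u ^ cl w S * u ^ (if ?l \<le> length m then 1 else 0))"
      unfolding wt_def st prob_append power_add by simp
    also have "\<dots> = wt S * \<phi> m" unfolding wt_def \<phi>_def by (simp add: algebra_simps)
    finally show ?thesis .
  qed
  have Rpart: "gfw wt (Rset w) = fps_const (x * t ^ ?l * u) * gf p (Rset w)"
  proof -
    have "gfw wt (Rset w) = gfw (\<lambda>r. (x * t ^ ?l * u) * prob p r) (Rset w)"
      by (rule gfw_cong) (simp add: wt_def stats_R[OF _ w])
    thus ?thesis by (simp add: gfw_const gf_gfw)
  qed
  have Meq: "Mset w = Kset w \<union> (Mset w - Kset w)" using Kset_sub_M by blast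
  have Mpart: "gfw \<phi> (Mset w) = fps_const x * gfw (\<lambda>k. prob p k * t ^ length k) (Kset w) +
                      fps_const (x * t ^ length w * u) * (gf p (Mset w) - gf p (Kset w))"
  proof -
    have "gfw \<phi> (Mset w) = gfw \<phi> (Kset w) + gfw \<phi> (Mset w - Kset w)"
      by (subst Meq) (rule gfw_union, blast)
    also have "gfw \<phi> (Kset w) = gfw (\<lambda>k. x * (prob p k * t ^ length k)) (Kset w)"
      by (rule gfw_cong) (auto simp: \<phi>_def Kset_char)
    also have "gfw \<phi> (Mset w - Kset w) = gfw (\<lambda>k. (x * t ^ ?l * u) * prob p k) (Mset w - Kset w)"
      by (rule gfw_cong) (auto simp: \<phi>_def Kset_char)
    also have "gfw (prob p) (Mset w - Kset w) = gf p (Mset w) - gf p (Kset w)"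
    proof -
      have "gf p (Mset w) = gfw (prob p) (Kset w) + gfw (prob p) (Mset w - Kset w)"
        by (subst Meq) (simp add: gf_gfw gfw_union Diff_disjoint del: Un_Diff_cancel)
      thus ?thesis by (simp add: gf_gfw)
    qed
    ultimately show ?thesis by (simp add: gfw_const)
  qed
  have "gfw wt (Ew w) = gfw wt (Rset w) + gfw wt ?I"
    by (subst Eeq) (rule gfw_union[OF disj])
  also have "gfw wt ?I = gfw wt (Ew w) * gfw \<phi> (Mset w)"
    by (rule gfw_mult[where f=wt and g=wt and h=\<phi>, OF inj refl mult])
  also note Rpart
  also note Mpart
  finally show ?thesis .
qed

lemma G_identity:
  fixes w :: "'a::finite list" and p :: "'a \<Rightarrow> real" and x t u :: real
  assumes w: "w \<noteq> []"
  defines "wt \<equiv> \<lambda>T. prob p T * x ^ occ w T * t ^ cov w T * u ^ cl w T"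
  shows "gfw wt UNIV = gf p (Nset w) + gfw wt (Ew w) * gf p (Uset w)"
proof -
  let ?I = "(\<lambda>(a,b). a @ b) ` (Ew w \<times> Uset w)"
  have Ueq: "UNIV = Nset w \<union> ?I"
  proof (rule set_eqI, rule iffI)
    fix T :: "'a list"
    show "T \<in> Nset w \<union> ?I"
    proof (cases "T \<in> Nset w")
      case False
      then obtain S v where "S \<in> Ew w" "v \<in> Uset w" "T = S @ v" using NU_decomp by blast
      thus ?thesis by blast
    qed simp
  qed simp
  have disj: "Nset w \<inter> ?I = {}"
  proof -
    have "S @ v \<notin> Nset w" if "S \<in> Ew w" "v \<in> Uset w" for S v
      using occs_EU[OF that] that(1) by (auto simp: Nset_char Ew_char)
    thus ?thesis by auto
  qed
  have inj: "inj_on (\<lambda>(a,b). a @ b) (Ew w \<times> Uset w)"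
  proof (rule inj_onI, clarify)
    fix a k a' k' assume h: "a \<in> Ew w" "k \<in> Uset w" "a' \<in> Ew w" "k' \<in> Uset w" "a @ k = a' @ k'"
    thus "a = a' \<and> k = k'" using NU_inj[OF h] by blast
  qed
  have mult: "wt (S @ v) = wt S * prob p v" if "S \<in> Ew w" "v \<in> Uset w" for S v
    using stats_EU[OF that] by (simp add: wt_def prob_append)
  have "gfw wt UNIV = gfw wt (Nset w) + gfw wt ?I"
    by (subst Ueq) (rule gfw_union[OF disj])
  also have "gfw wt (Nset w) = gf p (Nset w)"
    unfolding gf_gfw by (rule gfw_cong) (simp add: wt_def stats_N)
  also have "gfw wt ?I = gfw wt (Ew w) * gfw (prob p) (Uset w)"
    by (rule gfw_mult[where f=wt and g=wt and h="prob p", OF inj refl mult])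
  finally show ?thesis by (simp add: gf_gfw)
qed



lemma gfw_nth0: "[] \<notin> L \<Longrightarrow> gfw f L $ 0 = 0"
proof -
  assume h: "[] \<notin> L"
  have e: "{x. x \<in> L \<and> length x = 0} = {}" using h by auto
  have "gfw f L $ 0 = (\<Sum>x\<in>{x. x \<in> L \<and> length x = 0}. f x)" by (rule gfw_nth)
  also have "\<dots> = 0" unfolding e by simp
  finally show ?thesis .
qed

lemma shiftX: "(\<And>n. n < l \<Longrightarrow> f $ n = 0) \<Longrightarrow> f = fps_shift l f * fps_X ^ l"
  by (intro fps_ext) (simp add: fps_X_power_mult_right_nth)

lemma divX:
  fixes f g :: "real fps"
  assumes "f = g * fps_X ^ l" "c \<noteq> 0"
  shows "f / (fps_const c * fps_X ^ l) = fps_const (inverse c) * g"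
proof -
  have "f / (fps_const c * fps_X ^ l) = g / fps_const c"
    using assms(1) by (simp add: fps_divide_cancel)
  also have "\<dots> = g * inverse (fps_const c)" by (rule fps_divide_unit) (use assms(2) in simp)
  finally show ?thesis by (metis fps_const_inverse mult.commute)
qed

lemma R_low: "n < length w \<Longrightarrow> gf p (Rset w) $ n = 0"
proof -
  assume n: "n < length w"
  have e: "{x. x \<in> Rset w \<and> length x = n} = {}" using n by (auto simp: Rset_char dest: Ew_len)
  show ?thesis unfolding gf_def fps_nth_Abs_fps e by simp
qed

lemma MK_low: "n < length w \<Longrightarrow> (gf p (Mset w) - gf p (Kset w)) $ n = 0"
proof -
  assume n: "n < length w"
  have e: "{x. x \<in> Mset w \<and> length x = n} = {x. x \<in> Kset w \<and> length x = n}" using n by (auto simp: Kset_char)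
  show ?thesis unfolding gf_def fps_nth_Abs_fps fps_sub_nth e by simp
qed

theorem mainTheorem4:
  fixes p :: "'a::finite \<Rightarrow> real" and w :: "'a list"
  assumes "card (UNIV :: 'a set) \<ge> 2"
    and "\<And>a. p a > 0" and "(\<Sum>a\<in>UNIV. p a) = 1"
    and "length w \<ge> 2"
  shows "\<forall>x t u :: real.
           Gser p w x t u = Fser p w (fps_const u * Kfrak p w x t) \<and>
           Kfrak p w x t = clump_ser p w x t"
proof (intro allI)
  fix x t u :: real
  have w: "w \<noteq> []" using assms(4) by auto
  let ?l = "length w"
  define \<pi> where "\<pi> = prob p w"
  have pi: "\<pi> > 0" unfolding \<pi>_def by (rule prob_pos[OF assms(2)])
  define KK where "KK = gfw (\<lambda>k. prob p k * t ^ length k) (Kset w)"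
  have KK0: "KK $ 0 = 0" unfolding KK_def
    by (rule gfw_nth0) (use Kset_sub_M[of w] in \<open>auto simp: Mset_char\<close>)
  define D where "D = 1 - fps_const x * KK"
  have D0: "D $ 0 = 1" using KK0 by (simp add: D_def)
  define iD where "iD = inverse D"
  have DiD: "D * iD = 1" "iD * D = 1" using D0 by (auto simp: iD_def inverse_mult_eq_1')
  define Num where "Num = fps_const (\<pi> * t ^ ?l * x) * fps_X ^ ?l"
  have Kf: "Kfrak p w x t = Num * iD"
  proof -
    have "fps_const x * fps_const (prob p w) * (fps_const t * fps_X) ^ ?l = Num"
      by (simp add: Num_def \<pi>_def power_mult_distrib algebra_simps)
    moreover have "fps_compose (gf p (Kset w)) (fps_const t * fps_X) = KK" by (simp add: KK_eq KK_def)
    ultimately have "Kfrak p w x t = Num / D" by (simp add: Kfrak_def D_def)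
    thus ?thesis using D0 by (simp add: fps_divide_unit iD_def)
  qed
  define CS where "CS = gfw (\<lambda>c. prob p c * t ^ length c * x ^ occ w c) (clump_words w)"
  have CSD: "CS * D = Num"
  proof -
    have "CS = Num + CS * (fps_const x * KK)"
      using clump_identity[OF w, of p t x] by (simp add: CS_def KK_def Num_def \<pi>_def)
    hence "CS - CS * (fps_const x * KK) = (Num + CS * (fps_const x * KK)) - CS * (fps_const x * KK)"
      by (rule arg_cong[where f="\<lambda>z. z - CS * (fps_const x * KK)"])
    hence "CS - CS * (fps_const x * KK) = Num" by simp
    thus ?thesis by (simp add: D_def algebra_simps)
  qed
  have part2: "Kfrak p w x t = clump_ser p w x t"
  proof -
    have "Kfrak p w x t = CS * (D * iD)" using Kf CSD by (simp add: mult.assoc)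
    also have "\<dots> = CS" using DiD by simp
    finally show ?thesis by (simp add: CS_def clump_ser_eq)
  qed
  define c where "c = x * t ^ ?l * u"
  define MK where "MK = gf p (Mset w) - gf p (Kset w)"
  have MK0: "MK $ 0 = 0" using MK_low[of 0 w p] w by (simp add: MK_def)
  define E where "E = D - fps_const c * MK"
  have E0: "E $ 0 = 1" using D0 MK0 by (simp add: E_def)
  define iE where "iE = inverse E"
  have EiE: "E * iE = 1" using E0 by (auto simp: iE_def inverse_mult_eq_1')
  define wt where "wt = (\<lambda>T. prob p T * x ^ occ w T * t ^ cov w T * u ^ cl w T)"
  define LW where "LW = gfw wt (Ew w)"
  define R where "R = gf p (Rset w)"
  define N where "N = gf p (Nset w)"
  define U where "U = gf p (Uset w)"
  have LWE: "LW * E = fps_const c * R"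
  proof -
    have "LW = fps_const c * R + LW * (fps_const x * KK + fps_const c * MK)"
      using LW_identity[OF w, of p x t u] by (simp add: LW_def wt_def c_def R_def KK_def MK_def)
    hence "LW - LW * (fps_const x * KK + fps_const c * MK) =
      (fps_const c * R + LW * (fps_const x * KK + fps_const c * MK)) - LW * (fps_const x * KK + fps_const c * MK)"
      by (rule arg_cong[where f="\<lambda>z. z - LW * (fps_const x * KK + fps_const c * MK)"])
    hence "LW - LW * (fps_const x * KK + fps_const c * MK) = fps_const c * R" by simp
    thus ?thesis by (simp add: E_def D_def algebra_simps)
  qed
  have LWv: "LW = fps_const c * R * iE"
  proof -
    have "LW = LW * (E * iE)" using EiE by simp
    also have "\<dots> = fps_const c * R * iE" using LWE by (simp add: mult.assoc[symmetric])
    finally show ?thesis .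
  qed
  have G: "Gser p w x t u = N + fps_const c * R * iE * U"
    using G_identity[OF w, of p x t u] by (simp add: Gser_eq N_def U_def LWv[symmetric] LW_def wt_def)
  define R' where "R' = fps_shift ?l R"
  have RR': "R = R' * fps_X ^ ?l" unfolding R'_def by (rule shiftX) (simp add: R_def R_low)
  define MK' where "MK' = fps_shift ?l MK"
  have MM': "MK = MK' * fps_X ^ ?l" unfolding MK'_def MK_def by (rule shiftX) (rule MK_low)
  have pi0: "\<pi> \<noteq> 0" using pi by simp
  have Rdiv: "R / (fps_const \<pi> * fps_X ^ ?l) = fps_const (inverse \<pi>) * R'" by (rule divX[OF RR' pi0])
  have Mdiv: "MK / (fps_const \<pi> * fps_X ^ ?l) = fps_const (inverse \<pi>) * MK'" by (rule divX[OF MM' pi0])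
  define y where "y = fps_const u * Kfrak p w x t"
  have cc: "inverse \<pi> * (u * (\<pi> * t ^ ?l * x)) = c" using pi0 by (simp add: c_def field_simps)
  have gen: "fps_const (inverse \<pi>) * G' * y = fps_const c * (G' * fps_X ^ ?l) * iD" for G'
  proof -
    have "fps_const (inverse \<pi>) * G' * y =
          fps_const (inverse \<pi>) * G' * (fps_const u * (fps_const (\<pi> * t ^ ?l * x) * fps_X ^ ?l * iD))"
      by (simp add: y_def Kf Num_def)
    also have "\<dots> = fps_const (inverse \<pi> * (u * (\<pi> * t ^ ?l * x))) * (G' * fps_X ^ ?l) * iD"
      by (simp only: fps_const_mult[symmetric] mult.assoc mult.left_commute mult.commute)
    also have "\<dots> = fps_const c * (G' * fps_X ^ ?l) * iD" by (simp only: cc)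
    finally show ?thesis .
  qed
  have A1: "R / (fps_const \<pi> * fps_X ^ ?l) * y = fps_const c * R * iD"
    using gen[of R'] Rdiv RR' by simp
  have A2: "MK / (fps_const \<pi> * fps_X ^ ?l) * y = fps_const c * MK * iD"
    using gen[of MK'] Mdiv MM' by simp
  have B: "1 - fps_const c * MK * iD = E * iD"
    using DiD by (simp add: E_def algebra_simps)
  have EiD0: "(E * iD) $ 0 = 1" using E0 D0 by (simp add: iD_def)
  have C: "1 / (E * iD) = iE * D"
  proof -
    have "1 / (E * iD) = inverse (E * iD)" using EiD0 by (simp add: fps_divide_unit)
    also have "\<dots> = inverse E * inverse iD" by (rule fps_inverse_mult)
    also have "inverse iD = D" using D0 by (simp add: iD_def)
    finally show ?thesis by (simp add: iE_def)
  qed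
  have Fv: "Fser p w y = N + fps_const c * R * iE * U"
  proof -
    have "Fser p w y = N + (R / (fps_const \<pi> * fps_X ^ ?l) * y) *
          (1 / (1 - MK / (fps_const \<pi> * fps_X ^ ?l) * y)) * U"
      by (simp add: Fser_def N_def R_def MK_def U_def \<pi>_def mult.assoc)
    also have "\<dots> = N + fps_const c * R * iD * (iE * D) * U" by (simp only: A1 A2 B C)
    also have "fps_const c * R * iD * (iE * D) = fps_const c * R * iE * (iD * D)" by (simp only: mult_ac)
    also have "\<dots> = fps_const c * R * iE" using DiD by simp
    finally show ?thesis .
  qed
  show "Gser p w x t u = Fser p w (fps_const u * Kfrak p w x t) \<and> Kfrak p w x t = clump_ser p w x t"
    using G Fv part2 by (simp add: y_def)
qed



end
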